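(* Let $\tau,t\in\mathbb{R}$ and let $\beta_n=\beta_n(\tau,t)$ be the recurrence coefficients of the monic orthogonal polynomials for the weight $\omega(x;\tau,t)=\exp(-x^6+\tau x^4+tx^2)$ on $\mathbb{R}$. Then, for $n\ge1$, $\beta_n$ and $\beta_{n+1}$ satisfy \begin{align*} &\frac{\partial^2\beta_n}{\partial t^2}-3\left(\beta_n+\beta_{n+1}-\tfrac29\tau\right)\frac{\partial\beta_n}{\partial t}+\beta_n^3+6\beta_n^2\beta_{n+1}+3\beta_n\beta_{n+1}^2-\tfrac23\tau\beta_n(\beta_n+2\beta_{n+1})-\tfrac13t\beta_n=\tfrac16n,\\ &\frac{\partial^2\beta_{n+1}}{\partial t^2}+3\left(\beta_n+\beta_{n+1}-\tfrac29\tau\right)\frac{\partial\beta_{n+1}}{\partial t}+\beta_{n+1}^3+6\beta_{n+1}^2\beta_n+3\beta_{n+1}\beta_n^2-\tfrac23\tau\beta_{n+1}(2\beta_n+\beta_{n+1})-\tfrac13t\beta_{n+1}=\tfrac16(n+1). \end{align*}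
   Context: The monic orthogonal polynomials satisfy $P_{n+1}(x)=xP_n(x)-\beta_nP_{n-1}(x)$ with $P_{-1}=0$, $P_0=1$, where $\beta_n>0$ for $n\ge1$. The convention $\beta_0=\beta_{-1}=0$ is used. *)

theory Defs
  imports "HOL-Analysis.Analysis" "HOL-Computational_Algebra.Polynomial"
begin

definition weight :: "real \<Rightarrow> real \<Rightarrow> real \<Rightarrow> real" where
  "weight tau t x = exp (- (x ^ 6) + tau * x ^ 4 + t * x ^ 2)"

definition wip :: "real \<Rightarrow> real \<Rightarrow> real poly \<Rightarrow> real poly \<Rightarrow> real" where
  "wip tau t p q = (LINT x|lborel. poly p x * poly q x * weight tau t x)"

definition monic_OP :: "real \<Rightarrow> real \<Rightarrow> nat \<Rightarrow> real poly" where
  "monic_OP tau t n = (THE p. degree p = n \<and> lead_coeff p = 1 \<and>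
       (\<forall>k<n. wip tau t p (monom 1 k) = 0))"

definition beta :: "nat \<Rightarrow> real \<Rightarrow> real \<Rightarrow> real" where
  "beta n tau t = (if n = 0 then 0 else
     (THE b. monic_OP tau t (Suc n) =
        [:0, 1:] * monic_OP tau t n - smult b (monic_OP tau t (n - 1))))"

end

theory Submission
  imports Defs "HOL-Probability.Probability" "HOL-Real_Asymp.Real_Asymp"
begin
lemma cubic_bound:
  fixes a s y :: real assumes y: "y \<ge> 0"
  shows "- (y^3) + a*y^2 + s*y \<le> \<bar>a\<bar>*(1 + \<bar>a\<bar> + \<bar>s\<bar>)^2 + \<bar>s\<bar>*(1 + \<bar>a\<bar> + \<bar>s\<bar>)"
proof -
  define M where "M = 1 + \<bar>a\<bar> + \<bar>s\<bar>"
  have M1: "M \<ge> 1" unfolding M_def by simp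
  have h1: "a*y^2 \<le> \<bar>a\<bar>*y^2" using y by (simp add: mult_right_mono)
  have h2: "s*y \<le> \<bar>s\<bar>*y" using y by (simp add: mult_right_mono)
  show ?thesis
  proof (cases "y \<le> M")
    case True
    have "\<bar>a\<bar>*y^2 \<le> \<bar>a\<bar>*M^2" using True y by (simp add: mult_left_mono power_mono)
    moreover have "\<bar>s\<bar>*y \<le> \<bar>s\<bar>*M" using True by (simp add: mult_left_mono)
    moreover have "y^3 \<ge> 0" using y by simp
    ultimately show ?thesis using h1 h2 unfolding M_def by linarith
  next
    case False
    have "\<bar>s\<bar>*y \<le> \<bar>s\<bar>*y^2" using False M1 y
      by (intro mult_left_mono) (auto simp: power2_eq_square)
    moreover have "y^2*(y - \<bar>a\<bar> - \<bar>s\<bar>) \<ge> 0" using False M_def y by simp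
    ultimately have "- (y^3) + a*y^2 + s*y \<le> 0" using h1 h2
      by (simp add: algebra_simps power2_eq_square power3_eq_cube)
    moreover have "0 \<le> \<bar>a\<bar>*M^2 + \<bar>s\<bar>*M" using M1 by simp
    ultimately show ?thesis unfolding M_def by linarith
  qed
qed

lemma weight_bound: "\<exists>B. \<forall>x. weight tau t x \<le> exp B * exp (- (x^2) / 2)"
proof -
  define s where "s = t + 1/2"
  obtain B where B: "\<And>y::real. y \<ge> 0 \<Longrightarrow> - (y^3) + tau*y^2 + s*y \<le> B"
    using cubic_bound by blast
  have "weight tau t x \<le> exp B * exp (- (x^2) / 2)" for x
  proof -
    have "- (x^6) + tau*x^4 + t*x^2 = (- ((x^2)^3) + tau*(x^2)^2 + s*x^2) - x^2/2"
      unfolding s_def by (simp add: algebra_simps flip: power_mult)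
    also have "\<dots> \<le> B - x^2/2" using B[of "x^2"] by simp
    finally show ?thesis unfolding weight_def by (simp flip: exp_add)
  qed
  then show ?thesis by blast
qed

lemma weight_pos: "weight tau t x > 0" unfolding weight_def by simp

lemma integrable_mom: "integrable lborel (\<lambda>x. x^k * weight tau t x)"
proof -
  obtain B where B: "\<And>x. weight tau t x \<le> exp B * exp (- (x^2) / 2)" using weight_bound by blast
  have "integrable lborel (\<lambda>x. (exp B * sqrt (2*pi)) * (std_normal_density x * \<bar>x\<bar>^k))"
    by (intro integrable_mult_right integrable_std_normal_moment_abs)
  then show ?thesis
  proof (rule Bochner_Integration.integrable_bound)
    show "(\<lambda>x. x ^ k * weight tau t x) \<in> borel_measurable lborel"
      unfolding weight_def by measurable
    show "AE x in lborel. norm (x ^ k * weight tau t x) \<le> norm (exp B * sqrt (2 * pi) * (std_normal_density x * \<bar>x\<bar> ^ k))"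
    proof (intro AE_I2)
      fix x :: real
      have "norm (x ^ k * weight tau t x) = \<bar>x\<bar>^k * weight tau t x"
        using weight_pos[of tau t x] by (simp add: abs_mult power_abs)
      also have "\<dots> \<le> \<bar>x\<bar>^k * (exp B * exp (- (x^2) / 2))"
        by (intro mult_left_mono B) simp
      also have "\<dots> = norm (exp B * sqrt (2 * pi) * (std_normal_density x * \<bar>x\<bar> ^ k))"
        by (simp add: std_normal_density_def normal_density_def abs_mult power_abs)
      finally show "norm (x ^ k * weight tau t x) \<le> norm (exp B * sqrt (2 * pi) * (std_normal_density x * \<bar>x\<bar> ^ k))" .
    qed
  qed
qed

definition mu :: "real \<Rightarrow> real \<Rightarrow> nat \<Rightarrow> real" where
  "mu tau t k = (LINT x|lborel. x^k * weight tau t x)"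

lemma integrable_poly_w: "integrable lborel (\<lambda>x. poly p x * weight tau t x)"
proof -
  have "integrable lborel (\<lambda>x. \<Sum>i\<le>degree p. coeff p i * (x^i * weight tau t x))"
    by (auto intro!: integrable_sum integrable_mult_right integrable_mom)
  then show ?thesis by (simp add: poly_altdef sum_distrib_right mult.assoc)
qed

lemma weight_even: "weight tau t (-x) = weight tau t x" unfolding weight_def by simp

lemma mu_odd: assumes "odd k" shows "mu tau t k = 0"
proof -
  have "mu tau t k = \<bar>-1\<bar> *\<^sub>R (LINT x|lborel. (0 + -1*x)^k * weight tau t (0 + -1*x))"
    unfolding mu_def by (rule lborel_integral_real_affine) simp
  also have "\<dots> = (LINT x|lborel. - (x^k * weight tau t x))"
    using assms by (simp add: weight_even)
  also have "\<dots> = - mu tau t k" unfolding mu_def by simp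
  finally show ?thesis by simp
qed

lemma weight_tendsto_top: "((\<lambda>x. x^k * weight tau t x) \<longlongrightarrow> 0) at_top"
  unfolding weight_def by real_asymp
lemma weight_tendsto_bot: "((\<lambda>x. x^k * weight tau t x) \<longlongrightarrow> 0) at_bot"
  unfolding weight_def by real_asymp

lemma poly_w_tendsto:
  shows "((\<lambda>x. poly q x * weight tau t x) \<longlongrightarrow> 0) at_top"
    and "((\<lambda>x. poly q x * weight tau t x) \<longlongrightarrow> 0) at_bot"
proof -
  have e: "poly q x * weight tau t x = (\<Sum>i\<le>degree q. coeff q i * (x^i * weight tau t x))" for x
    by (simp add: poly_altdef sum_distrib_right mult.assoc)
  have "((\<lambda>x. \<Sum>i\<le>degree q. coeff q i * (x^i * weight tau t x)) \<longlongrightarrow> (\<Sum>i\<le>degree q. coeff q i * 0)) at_top"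
    by (intro tendsto_sum tendsto_mult tendsto_const weight_tendsto_top)
  then show "((\<lambda>x. poly q x * weight tau t x) \<longlongrightarrow> 0) at_top" by (simp add: e)
  have "((\<lambda>x. \<Sum>i\<le>degree q. coeff q i * (x^i * weight tau t x)) \<longlongrightarrow> (\<Sum>i\<le>degree q. coeff q i * 0)) at_bot"
    by (intro tendsto_sum tendsto_mult tendsto_const weight_tendsto_bot)
  then show "((\<lambda>x. poly q x * weight tau t x) \<longlongrightarrow> 0) at_bot" by (simp add: e)
qed

definition Vp :: "real \<Rightarrow> real \<Rightarrow> real poly" where
  "Vp tau t = [:0, -2*t, 0, -4*tau, 0, 6:]"

lemma poly_Vp: "poly (Vp tau t) x = 6*x^5 - 4*tau*x^3 - 2*t*x"
  unfolding Vp_def by (simp add: algebra_simps power_numeral_reduce)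

lemma weight_deriv:
  "(weight tau t has_real_derivative weight tau t x * (- (6*x^5 - 4*tau*x^3 - 2*t*x))) (at x)"
  unfolding weight_def
  by (auto intro!: derivative_eq_intros simp: algebra_simps power_numeral_reduce)

lemma IBP:
  "(LINT x|lborel. poly (pderiv q) x * weight tau t x)
     = (LINT x|lborel. poly (q * Vp tau t) x * weight tau t x)"
proof -
  define F where "F x = poly q x * weight tau t x" for x
  define f where "f x = poly (pderiv q - q * Vp tau t) x * weight tau t x" for x
  have D: "(F has_real_derivative f x) (at x)" for x
    unfolding F_def f_def
    by (auto intro!: derivative_eq_intros weight_deriv[THEN DERIV_cong] simp: poly_Vp algebra_simps)
  have "(LBINT x=-\<infinity>..\<infinity>. f x) = 0 - 0"
  proof (rule interval_integral_FTC_integrable)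
    show "- \<infinity> < (\<infinity>::ereal)" by simp
    show "(F has_vector_derivative f x) (at x)" for x
      using D by (simp add: has_real_derivative_iff_has_vector_derivative)
    show "isCont f x" for x unfolding f_def weight_def by (intro continuous_intros)
    show "set_integrable lborel (einterval (- \<infinity>) \<infinity>) f"
      unfolding set_integrable_def einterval_eq_UNIV f_def
      using integrable_poly_w[of "pderiv q - q * Vp tau t" tau t] by (simp del: poly_diff poly_mult)
    show "((F \<circ> real_of_ereal) \<longlongrightarrow> 0) (at_right (- \<infinity>))"
      unfolding ereal_tendsto_simps1 F_def by (rule poly_w_tendsto)
    show "((F \<circ> real_of_ereal) \<longlongrightarrow> 0) (at_left \<infinity>)"
      unfolding ereal_tendsto_simps1 F_def by (rule poly_w_tendsto)
  qed
  then have "(LINT x|lborel. f x) = 0"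
    by (simp add: interval_lebesgue_integral_def einterval_eq_UNIV set_lebesgue_integral_def)
  moreover have "f x = poly (pderiv q) x * weight tau t x - poly (q * Vp tau t) x * weight tau t x" for x
    unfolding f_def by (simp add: left_diff_distrib)
  ultimately show ?thesis
    by (simp add: integrable_poly_w del: poly_mult)
qed

lemma poly_sq_pos:
  assumes "p \<noteq> 0"
  shows "(LINT x|lborel. poly (p*p) x * weight tau t x) > 0"
proof -
  have int: "integrable lborel (\<lambda>x. poly (p*p) x * weight tau t x)" by (rule integrable_poly_w)
  have nn: "AE x in lborel. 0 \<le> poly (p*p) x * weight tau t x"
    by (intro AE_I2) (simp add: weight_pos less_imp_le)
  have ge: "(LINT x|lborel. poly (p*p) x * weight tau t x) \<ge> 0"
    by (intro integral_nonneg_AE nn)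
  have ne: "(LINT x|lborel. poly (p*p) x * weight tau t x) \<noteq> 0"
  proof
    assume "(LINT x|lborel. poly (p*p) x * weight tau t x) = 0"
    then have "AE x in lborel. poly (p*p) x * weight tau t x = 0"
      using integral_nonneg_eq_0_iff_AE[OF int nn] by simp
    then have A1: "AE x in lborel. x \<in> {x. poly p x = 0}"
      by eventually_elim (simp add: weight_pos[THEN less_imp_neq, symmetric])
    have fin: "finite {x. poly p x = 0}" using assms by (rule poly_roots_finite)
    have A2: "AE x in lborel. \<forall>c\<in>{x. poly p x = 0}. x \<noteq> c"
      using fin by (subst AE_finite_all) (auto intro: AE_lborel_singleton)
    from A1 A2 have "AE x in lborel. (x::real) \<noteq> x" by eventually_elim auto
    then have "AE x::real in lborel. False" by simp
    then have "ae_filter (lborel::real measure) = bot" using trivial_limit_def by blast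
    then show False by (simp add: ae_filter_eq_bot_iff)
  qed
  from ge ne show ?thesis by simp
qed


lemma exp_taylor2: "\<bar>exp (a::real) - 1 - a\<bar> \<le> a^2 * exp \<bar>a\<bar>"
proof -
  obtain c where c: "\<bar>c\<bar> \<le> \<bar>a\<bar>" "exp a = (\<Sum>m<2. (a ^ m) / fact m) + (exp c / fact 2) * a ^ 2"
    using Maclaurin_exp_le[of a 2] by blast
  have "exp a - 1 - a = exp c / 2 * a^2" using c(2) by (simp add: numeral_2_eq_2)
  moreover have "exp c / 2 * a^2 \<ge> 0" by simp
  ultimately have "\<bar>exp a - 1 - a\<bar> = exp c / 2 * a^2" by (metis abs_of_nonneg)
  also have "\<dots> \<le> exp \<bar>a\<bar> * a^2"
  proof (intro mult_right_mono)
    have "c \<le> \<bar>a\<bar>" using c(1) by linarith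
    then have "exp c \<le> exp \<bar>a\<bar>" by simp
    then show "exp c / 2 \<le> exp \<bar>a\<bar>" using exp_gt_zero[of "\<bar>a\<bar>"] by linarith
  qed simp
  finally show ?thesis by (simp add: mult.commute)
qed

lemma deriv_from_bound:
  fixes f :: "real \<Rightarrow> real"
  assumes "\<And>s. \<bar>s - t\<bar> \<le> 1 \<Longrightarrow> \<bar>f s - f t - (s - t) * D\<bar> \<le> C * (s - t)^2"
  shows "(f has_real_derivative D) (at t)"
proof -
  have ev0: "\<forall>s. s \<noteq> t \<and> dist s t < 1 \<longrightarrow> norm ((f s - f t) / (s - t) - D) \<le> C * \<bar>s - t\<bar>"
  proof (intro allI impI)
    fix s assume s: "s \<noteq> t \<and> dist s t < 1"
    then have st: "s \<noteq> t" "\<bar>s - t\<bar> \<le> 1" by (auto simp: dist_real_def)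
    have st0: "s - t \<noteq> 0" using st by simp
    have "(f s - f t) / (s - t) - D = (f s - f t - (s - t) * D) / (s - t)"
      using st0 by (simp add: diff_divide_distrib)
    then have "norm ((f s - f t) / (s - t) - D) = \<bar>f s - f t - (s - t) * D\<bar> / \<bar>s - t\<bar>"
      by (simp add: abs_divide)
    also have "\<dots> \<le> C * (s - t)^2 / \<bar>s - t\<bar>"
      by (rule divide_right_mono[OF assms[OF st(2)]]) simp
    also have "C * (s - t)^2 / \<bar>s - t\<bar> = C * \<bar>s - t\<bar>"
    proof -
      show ?thesis using st0 by (auto simp: power2_eq_square abs_if field_simps)
    qed
    finally show "norm ((f s - f t) / (s - t) - D) \<le> C * \<bar>s - t\<bar>" .
  qed
  have ev: "eventually (\<lambda>s. norm ((f s - f t) / (s - t) - D) \<le> C * \<bar>s - t\<bar>) (at t)"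
    unfolding eventually_at using ev0 by (intro exI[of _ 1]) auto
  have "((\<lambda>s. C * \<bar>s - t\<bar>) \<longlongrightarrow> C * \<bar>t - t\<bar>) (at t)"
    by (intro tendsto_intros)
  then have "((\<lambda>s. C * \<bar>s - t\<bar>) \<longlongrightarrow> 0) (at t)" by simp
  from Lim_null_comparison[OF ev this] have "((\<lambda>s. (f s - f t) / (s - t)) \<longlongrightarrow> D) (at t)"
    by (simp add: LIM_zero_iff)
  then show ?thesis by (simp add: has_field_derivative_iff)
qed

lemma lin3:
  fixes f g q :: "real \<Rightarrow> real"
  assumes "integrable lborel f" "integrable lborel g" "integrable lborel q"
  shows "(LINT x|lborel. f x - g x - h * q x) = (LINT x|lborel. f x) - (LINT x|lborel. g x) - h * (LINT x|lborel. q x)"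
  using assms by simp

lemma mu_deriv: "((\<lambda>s. mu tau s k) has_real_derivative mu tau t (k+2)) (at t)"
proof (rule deriv_from_bound)
  fix s assume hs: "\<bar>s - t\<bar> \<le> 1"
  define h where "h = s - t"
  define C where "C = (LINT x|lborel. \<bar>x^(k+4) * weight tau (t+1) x\<bar>)"
  have ws: "weight tau s x = weight tau t x * exp (h * x^2)" for x
    unfolding weight_def h_def by (simp flip: exp_add add: algebra_simps)
  have w1: "weight tau (t+1) x = weight tau t x * exp (x^2)" for x
    unfolding weight_def by (simp flip: exp_add add: algebra_simps)
  have eq: "mu tau s k - mu tau t k - h * mu tau t (k+2)
      = (LINT x|lborel. x^k * weight tau s x - x^k * weight tau t x - h * (x^(k+2) * weight tau t x))"
    unfolding mu_def by (rule lin3[symmetric]) (rule integrable_mom)+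
  have "\<bar>LINT x|lborel. x^k * weight tau s x - x^k * weight tau t x - h * (x^(k+2) * weight tau t x)\<bar>
      \<le> (LINT x|lborel. h^2 * \<bar>x^(k+4) * weight tau (t+1) x\<bar>)"
  proof (rule integral_abs_bound_integral)
    show "integrable lborel (\<lambda>x. x^k * weight tau s x - x^k * weight tau t x - h * (x^(k+2) * weight tau t x))"
      by (intro Bochner_Integration.integrable_diff integrable_mult_right integrable_mom)
    show "integrable lborel (\<lambda>x. h^2 * \<bar>x^(k+4) * weight tau (t+1) x\<bar>)"
      by (intro integrable_mult_right integrable_abs integrable_mom)
    fix x :: real
    have "x^k * weight tau s x - x^k * weight tau t x - h * (x^(k+2) * weight tau t x)
        = x^k * weight tau t x * (exp (h*x^2) - 1 - h*x^2)"
      by (simp add: ws algebra_simps power_add power2_eq_square)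
    also have "\<bar>\<dots>\<bar> \<le> \<bar>x^k * weight tau t x\<bar> * ((h*x^2)^2 * exp \<bar>h*x^2\<bar>)"
      unfolding abs_mult[of "x^k * weight tau t x"] by (intro mult_left_mono exp_taylor2) simp
    also have "\<dots> \<le> \<bar>x^k * weight tau t x\<bar> * ((h*x^2)^2 * exp (x^2))"
    proof -
      have "\<bar>h*x^2\<bar> \<le> x^2" using hs h_def by (simp add: abs_mult) (intro mult_left_le_one_le, auto)
      then show ?thesis by (intro mult_left_mono) auto
    qed
    also have "\<dots> = h^2 * \<bar>x^(k+4) * weight tau (t+1) x\<bar>"
    proof -
      have a: "\<bar>x^(k+4) * weight tau (t+1) x\<bar> = \<bar>x\<bar>^k * x^4 * (weight tau t x * exp(x^2))"
        using weight_pos[of tau t x] by (simp add: w1 abs_mult power_add power_abs)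
      have b: "\<bar>x^k * weight tau t x\<bar> = \<bar>x\<bar>^k * weight tau t x"
        using weight_pos[of tau t x] by (simp add: abs_mult power_abs)
      have c: "(h*x^2)^2 = h^2 * x^4" by (simp add: power_mult_distrib flip: power_mult)
      show ?thesis unfolding a b c by (simp add: algebra_simps)
    qed
    finally show "\<bar>x^k * weight tau s x - x^k * weight tau t x - h * (x^(k+2) * weight tau t x)\<bar>
        \<le> h^2 * \<bar>x^(k+4) * weight tau (t+1) x\<bar>" .
  qed
  also have "\<dots> = C * h^2" unfolding C_def by simp
  finally show "\<bar>mu tau s k - mu tau t k - (s - t) * mu tau t (k + 2)\<bar> \<le> C * (s - t)^2"
    using eq h_def by simp
qed

definition Lm :: "real \<Rightarrow> real \<Rightarrow> real poly \<Rightarrow> real" where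
  "Lm tau t p = (LINT x|lborel. poly p x * weight tau t x)"

lemma Lm_add: "Lm tau t (p + q) = Lm tau t p + Lm tau t q"
proof -
  have "Lm tau t (p + q) = (LINT x|lborel. poly p x * weight tau t x + poly q x * weight tau t x)"
    unfolding Lm_def by (simp add: distrib_right)
  also have "\<dots> = Lm tau t p + Lm tau t q"
    unfolding Lm_def by (rule Bochner_Integration.integral_add) (rule integrable_poly_w)+
  finally show ?thesis .
qed

lemma Lm_smult: "Lm tau t (smult c p) = c * Lm tau t p"
  unfolding Lm_def by (simp add: mult.assoc)

lemma Lm_minus: "Lm tau t (- p) = - Lm tau t p"
  unfolding Lm_def by simp

lemma Lm_diff: "Lm tau t (p - q) = Lm tau t p - Lm tau t q"
  using Lm_add[of tau t p "-q"] by (simp add: Lm_minus)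

lemma Lm_0: "Lm tau t 0 = 0" unfolding Lm_def by simp

lemma Lm_sum: "Lm tau t (\<Sum>i\<in>A. f i) = (\<Sum>i\<in>A. Lm tau t (f i))"
proof (induction A rule: infinite_finite_induct)
  case (infinite A) then show ?case by (simp add: Lm_0)
next
  case empty then show ?case by (simp add: Lm_0)
next
  case (insert x F) then show ?case by (simp add: Lm_add)
qed

lemma wip_Lm: "wip tau t p q = Lm tau t (p * q)"
  unfolding wip_def Lm_def by simp

lemma Lm_moments: "degree p \<le> N \<Longrightarrow> Lm tau t p = (\<Sum>i\<le>N. coeff p i * mu tau t i)"
proof -
  assume N: "degree p \<le> N"
  have "poly p x * weight tau t x = (\<Sum>i\<le>N. coeff p i * (x^i * weight tau t x))" for x
  proof -
    have "poly p x = (\<Sum>i\<le>N. coeff p i * x ^ i)"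
      unfolding poly_altdef using N
      by (intro sum.mono_neutral_left) (auto simp: coeff_eq_0)
    then show ?thesis by (simp add: sum_distrib_right mult.assoc)
  qed
  then have "Lm tau t p = (LINT x|lborel. (\<Sum>i\<le>N. coeff p i * (x^i * weight tau t x)))"
    unfolding Lm_def by simp
  also have "\<dots> = (\<Sum>i\<le>N. coeff p i * mu tau t i)"
    unfolding mu_def by (subst Bochner_Integration.integral_sum) (auto intro!: integrable_mult_right integrable_mom)
  finally show ?thesis .
qed

lemma Lm_X2: "degree p \<le> N \<Longrightarrow> Lm tau t ([:0,0,1:] * p) = (\<Sum>i\<le>N. coeff p i * mu tau t (i+2))"
proof -
  assume N: "degree p \<le> N"
  have "poly ([:0,0,1:] * p) x * weight tau t x = (\<Sum>i\<le>N. coeff p i * (x^(i+2) * weight tau t x))" for x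
  proof -
    have "poly p x = (\<Sum>i\<le>N. coeff p i * x ^ i)"
      unfolding poly_altdef using N
      by (intro sum.mono_neutral_left) (auto simp: coeff_eq_0)
    then show ?thesis by (simp add: sum_distrib_right sum_distrib_left algebra_simps power_add power2_eq_square)
  qed
  then have "Lm tau t ([:0,0,1:] * p) = (LINT x|lborel. (\<Sum>i\<le>N. coeff p i * (x^(i+2) * weight tau t x)))"
    unfolding Lm_def by presburger
  also have "\<dots> = (\<Sum>i\<le>N. coeff p i * mu tau t (i+2))"
    unfolding mu_def
    by (subst Bochner_Integration.integral_sum, rule integrable_mult_right, rule integrable_mom)
       (simp only: integral_mult_right_zero)
  finally show ?thesis .
qed

lemma Lm_pos: "p \<noteq> 0 \<Longrightarrow> Lm tau t (p * p) > 0"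
  unfolding Lm_def by (rule poly_sq_pos)

lemma Lm_IBP: "Lm tau t (pderiv q) = Lm tau t (q * Vp tau t)"
  unfolding Lm_def by (rule IBP)

definition par :: "nat \<Rightarrow> real poly \<Rightarrow> bool" where
  "par m p \<longleftrightarrow> (\<forall>i. odd (i + m) \<longrightarrow> coeff p i = 0)"

lemma par_mult: assumes "par a p" "par b q" shows "par (a + b) (p * q)"
  unfolding par_def
proof (intro allI impI)
  fix i assume odd: "odd (i + (a + b))"
  have "coeff p j * coeff q (i - j) = 0" if "j \<le> i" for j
  proof (cases "odd (j + a)")
    case True then show ?thesis using assms(1) by (simp add: par_def)
  next
    case False
    then have "odd (i - j + b)" using odd that by presburger
    then show ?thesis using assms(2) by (simp add: par_def)
  qed
  then have "\<forall>j\<in>{..i}. coeff p j * coeff q (i - j) = 0" by simp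
  then show "coeff (p * q) i = 0" unfolding coeff_mult by (rule sum.neutral)
qed

lemma par_X: "par 1 [:0,1:]" unfolding par_def by (auto simp: coeff_pCons split: nat.splits)
lemma par_1: "par 0 1" unfolding par_def by (auto simp: coeff_1 elim: oddE)
lemma par_Xpow: "par k ([:0,1:]^k)"
  by (induction k) (auto simp: par_1 dest: par_mult[OF par_X])
lemma par_diff: "par m p \<Longrightarrow> par m q \<Longrightarrow> par m (p - q)" unfolding par_def by simp
lemma par_smult: "par m p \<Longrightarrow> par m (smult c p)" unfolding par_def by simp
lemma par_mod: assumes "par m p" "even (m + m')" shows "par m' p"
  unfolding par_def
proof (intro allI impI)
  fix i assume "odd (i + m')"
  then have "odd (i + m)" using assms(2) by presburger
  then show "coeff p i = 0" using assms(1) by (simp add: par_def)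
qed

lemma Lm_par_odd: assumes "par m p" "odd m" shows "Lm tau t p = 0"
proof -
  have "Lm tau t p = (\<Sum>i\<le>degree p. coeff p i * mu tau t i)" by (rule Lm_moments) simp
  also have "\<dots> = 0"
  proof (intro sum.neutral ballI)
    fix i show "coeff p i * mu tau t i = 0"
    proof (cases "odd i")
      case True then show ?thesis by (simp add: mu_odd)
    next
      case False then have "odd (i + m)" using assms(2) by simp
      then show ?thesis using assms(1) by (simp add: par_def)
    qed
  qed
  finally show ?thesis .
qed

fun OP :: "real \<Rightarrow> real \<Rightarrow> nat \<Rightarrow> real poly" where
  "OP tau t 0 = 1"
| "OP tau t (Suc 0) = [:0,1:]"
| "OP tau t (Suc (Suc n)) = [:0,1:] * OP tau t (Suc n)
     - smult (Lm tau t (OP tau t (Suc n) * OP tau t (Suc n)) / Lm tau t (OP tau t n * OP tau t n)) (OP tau t n)"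

definition hh :: "real \<Rightarrow> real \<Rightarrow> nat \<Rightarrow> real" where
  "hh tau t n = Lm tau t (OP tau t n * OP tau t n)"

definition bb :: "real \<Rightarrow> real \<Rightarrow> nat \<Rightarrow> real" where
  "bb tau t n = (if n = 0 then 0 else hh tau t n / hh tau t (n - 1))"

lemma OP_SS: "OP tau t (Suc (Suc n)) = [:0,1:] * OP tau t (Suc n) - smult (bb tau t (Suc n)) (OP tau t n)"
  by (simp add: bb_def hh_def)

declare OP.simps(3)[simp del]

lemma coeff_Xpow: "coeff ([:0,1:]^k :: real poly) i = (if k = i then 1 else 0)"
  using coeff_monom[of "1::real" k i] by (simp add: monom_altdef)

lemma OP_deg: "degree (OP tau t n) = n \<and> coeff (OP tau t n) n = 1"
proof (induction n rule: nat_less_induct)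
  case (1 n)
  show ?case
  proof (cases n)
    case 0 then show ?thesis by simp
  next
    case (Suc m)
    show ?thesis
    proof (cases m)
      case 0 then show ?thesis using Suc by simp
    next
      case (Suc k)
      have IH1: "degree (OP tau t (Suc k)) = Suc k" "coeff (OP tau t (Suc k)) (Suc k) = 1"
        using 1 \<open>n = Suc m\<close> Suc by auto
      have IH0: "degree (OP tau t k) = k" using 1 \<open>n = Suc m\<close> Suc by auto
      have nz: "OP tau t (Suc k) \<noteq> 0" using IH1(2) by auto
      have dA: "degree ([:0,1:] * OP tau t (Suc k)) = Suc (Suc k)"
        using IH1 nz by (simp add: degree_pCons_eq)
      have dB: "degree (smult (bb tau t (Suc k)) (OP tau t k)) < Suc (Suc k)"
        using IH0 by (metis degree_smult_le le_less_trans lessI less_SucI)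
      have "degree (OP tau t n) = Suc (Suc k)"
        unfolding \<open>n = Suc m\<close> Suc OP_SS using dA dB
        by (metis degree_add_eq_left degree_minus diff_conv_add_uminus)
      moreover have "coeff (OP tau t n) n = 1"
        unfolding \<open>n = Suc m\<close> Suc OP_SS using IH1 IH0 by (simp add: coeff_eq_0)
      ultimately show ?thesis using \<open>n = Suc m\<close> Suc by simp
    qed
  qed
qed

lemma OP_degree[simp]: "degree (OP tau t n) = n" using OP_deg by blast
lemma OP_lc[simp]: "coeff (OP tau t n) n = 1" using OP_deg by blast
lemma OP_ne0: "OP tau t n \<noteq> 0" by (metis OP_lc coeff_0 zero_neq_one)
lemma OP_coeff_high: "k > n \<Longrightarrow> coeff (OP tau t n) k = 0"
  by (simp add: coeff_eq_0)

lemma OP_par: "par n (OP tau t n)"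
proof (induction n rule: nat_less_induct)
  case (1 n)
  show ?case
  proof (cases n)
    case 0 then show ?thesis by (simp add: par_1)
  next
    case (Suc m)
    show ?thesis
    proof (cases m)
      case 0 then show ?thesis using Suc par_X by simp
    next
      case (Suc k)
      have a: "par (Suc (Suc k)) ([:0,1:] * OP tau t (Suc k))"
        using par_mult[OF par_X, of "Suc k"] 1 \<open>n = Suc m\<close> Suc by auto
      have b: "par (Suc (Suc k)) (smult (bb tau t (Suc k)) (OP tau t k))"
      proof (rule par_smult, rule par_mod)
        show "par k (OP tau t k)" using 1 \<open>n = Suc m\<close> Suc by auto
      qed simp
      show ?thesis unfolding \<open>n = Suc m\<close> Suc OP_SS by (rule par_diff[OF a b])
    qed
  qed
qed

lemma hh_pos: "hh tau t n > 0" unfolding hh_def by (rule Lm_pos[OF OP_ne0])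

lemma Lm_comm: "Lm tau t (p * q) = Lm tau t (q * p)" by (simp add: mult.commute)

lemma ortho_low:
  assumes p: "\<And>k. k < n \<Longrightarrow> Lm tau t (p * [:0,1:]^k) = 0"
      and q: "\<And>k. k \<ge> n \<Longrightarrow> coeff q k = 0"
  shows "Lm tau t (p * q) = 0"
proof -
  have qe: "q = (\<Sum>k<n. smult (coeff q k) ([:0,1:]^k))"
  proof (rule poly_eqI)
    fix i
    have "coeff (\<Sum>k<n. smult (coeff q k) ([:0,1:]^k)) i = (\<Sum>k<n. coeff q k * (if k = i then 1 else 0))"
      by (simp add: coeff_sum coeff_Xpow)
    also have "\<dots> = (\<Sum>k<n. if k = i then coeff q k else 0)" by (intro sum.cong) auto
    also have "\<dots> = coeff q i" using q by (cases "i < n") (auto simp: sum.delta)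
    finally show "coeff q i = coeff (\<Sum>k<n. smult (coeff q k) ([:0,1:]^k)) i" by simp
  qed
  have "Lm tau t (p * q) = (\<Sum>k<n. coeff q k * Lm tau t (p * [:0,1:]^k))"
    by (subst qe) (simp add: sum_distrib_left Lm_sum Lm_smult)
  also have "\<dots> = 0" using p by simp
  finally show ?thesis .
qed

lemma OP_lead:
  assumes "\<And>k. k < n \<Longrightarrow> Lm tau t (OP tau t n * [:0,1:]^k) = 0"
  shows "Lm tau t (OP tau t n * [:0,1:]^n) = hh tau t n"
proof -
  define r where "r = OP tau t n - [:0,1:]^n"
  have r0: "coeff r k = 0" if "k \<ge> n" for k
    using that unfolding r_def by (cases "k = n") (auto simp: coeff_Xpow OP_coeff_high)
  have "hh tau t n = Lm tau t (OP tau t n * [:0,1:]^n) + Lm tau t (OP tau t n * r)"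
    unfolding hh_def r_def by (simp add: algebra_simps Lm_add Lm_diff)
  moreover have "Lm tau t (OP tau t n * r) = 0" by (rule ortho_low[OF assms r0])
  ultimately show ?thesis by simp
qed

lemma OP_ortho: "k < n \<Longrightarrow> Lm tau t (OP tau t n * [:0,1:]^k) = 0"
proof (induction n arbitrary: k rule: nat_less_induct)
  case (1 n)
  have parz: "Lm tau t (OP tau t j * [:0,1:]^i) = 0" if "odd (j + i)" for i j
    by (rule Lm_par_odd[OF par_mult[OF OP_par par_Xpow] that])
  show ?case
  proof (cases n)
    case 0 then show ?thesis using 1 by simp
  next
    case (Suc m)
    show ?thesis
    proof (cases m)
      case 0 then show ?thesis using Suc 1 parz[of 0 1] by simp
    next
      case (Suc j)
      have n: "n = Suc (Suc j)" using \<open>n = Suc m\<close> Suc by simp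
      have IHa: "\<And>i. i < Suc j \<Longrightarrow> Lm tau t (OP tau t (Suc j) * [:0,1:]^i) = 0"
        using 1 n by auto
      have IHb: "\<And>i. i < j \<Longrightarrow> Lm tau t (OP tau t j * [:0,1:]^i) = 0"
        using 1 n by auto
      have e: "Lm tau t (OP tau t n * [:0,1:]^k)
          = Lm tau t (OP tau t (Suc j) * [:0,1:]^(Suc k)) - bb tau t (Suc j) * Lm tau t (OP tau t j * [:0,1:]^k)"
        unfolding n OP_SS by (simp add: algebra_simps Lm_diff Lm_smult)
      consider "k < j" | "k = j" | "k = Suc j" using 1 n by linarith
      then show ?thesis
      proof cases
        case 1
        have a: "Lm tau t (OP tau t (Suc j) * [:0,1:]^(Suc k)) = 0" by (rule IHa) (use 1 in simp)
        have b: "Lm tau t (OP tau t j * [:0,1:]^k) = 0" by (rule IHb) (use 1 in simp)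
        show ?thesis by (simp only: e a b)
      next
        case 2
        have "Lm tau t (OP tau t (Suc j) * [:0,1:]^(Suc k)) = hh tau t (Suc j)"
          using OP_lead[OF IHa] 2 by simp
        moreover have "Lm tau t (OP tau t j * [:0,1:]^k) = hh tau t j"
          using OP_lead[OF IHb] 2 by simp
        ultimately show ?thesis using e hh_pos[of tau t j] by (simp add: bb_def)
      next
        case 3
        then show ?thesis using e parz[of "Suc j" "Suc k"] parz[of j k] by simp
      qed
    qed
  qed
qed

lemma OP_lead': "Lm tau t (OP tau t n * [:0,1:]^n) = hh tau t n"
  by (rule OP_lead[OF OP_ortho])

lemma OP_low: "(\<And>k. k \<ge> n \<Longrightarrow> coeff q k = 0) \<Longrightarrow> Lm tau t (OP tau t n * q) = 0"
  by (rule ortho_low[OF OP_ortho])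

lemma OP_orth2: "i \<noteq> j \<Longrightarrow> Lm tau t (OP tau t i * OP tau t j) = 0"
proof (cases "i < j")
  case True
  then have "Lm tau t (OP tau t j * OP tau t i) = 0"
    by (intro OP_low) (simp add: OP_coeff_high)
  then show ?thesis by (simp add: mult.commute)
next
  case False
  assume "i \<noteq> j"
  with False have "j < i" by simp
  then show ?thesis by (intro OP_low) (simp add: OP_coeff_high)
qed

lemma OP_gram: "Lm tau t (OP tau t i * OP tau t j) = (if i = j then hh tau t i else 0)"
  using OP_orth2 by (simp add: hh_def)

lemma XOP: "[:0,1:] * OP tau t n = OP tau t (Suc n) + smult (bb tau t n) (OP tau t (n - 1))"
proof (cases n)
  case 0 then show ?thesis by (simp add: bb_def)
next
  case (Suc m) then show ?thesis by (simp add: OP_SS)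
qed

lemma hh_Suc: "hh tau t (Suc n) = bb tau t (Suc n) * hh tau t n"
  using hh_pos[of tau t n] by (simp add: bb_def)

lemma monic_OP_eq: "monic_OP tau t n = OP tau t n"
  unfolding monic_OP_def
proof (rule the_equality)
  show "degree (OP tau t n) = n \<and> lead_coeff (OP tau t n) = 1 \<and> (\<forall>k<n. wip tau t (OP tau t n) (monom 1 k) = 0)"
    by (simp add: wip_Lm monom_altdef OP_ortho)
next
  fix p assume p: "degree p = n \<and> lead_coeff p = 1 \<and> (\<forall>k<n. wip tau t p (monom 1 k) = 0)"
  define d where "d = p - OP tau t n"
  have d0: "coeff d k = 0" if "k \<ge> n" for k
    using that p unfolding d_def by (cases "k = n") (auto simp: coeff_eq_0)
  have "Lm tau t (p * d) = 0"
    by (rule ortho_low[OF _ d0]) (use p in \<open>auto simp add: wip_Lm monom_altdef\<close>)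
  moreover have "Lm tau t (OP tau t n * d) = 0" by (rule OP_low[OF d0])
  moreover have "d * d = p * d - OP tau t n * d" by (simp only: d_def left_diff_distrib)
  ultimately have "Lm tau t (d * d) = 0" by (simp add: Lm_diff)
  then have "d = 0" using Lm_pos[of d tau t] by auto
  then show "p = OP tau t n" unfolding d_def by simp
qed

lemma beta_eq: "beta n tau t = bb tau t n"
proof (cases n)
  case 0 then show ?thesis by (simp add: beta_def bb_def)
next
  case (Suc m)
  have "(THE b. OP tau t (Suc n) = [:0, 1:] * OP tau t n - smult b (OP tau t (n - 1))) = bb tau t n"
  proof (rule the_equality)
    show "OP tau t (Suc n) = [:0, 1:] * OP tau t n - smult (bb tau t n) (OP tau t (n - 1))"
      using Suc by (simp add: OP_SS)
  next
    fix b assume "OP tau t (Suc n) = [:0, 1:] * OP tau t n - smult b (OP tau t (n - 1))"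
    then have "smult b (OP tau t m) = smult (bb tau t n) (OP tau t m)"
      using Suc by (simp add: OP_SS)
    then have "coeff (smult b (OP tau t m)) m = coeff (smult (bb tau t n) (OP tau t m)) m" by simp
    then show "b = bb tau t n" by simp
  qed
  then show ?thesis using Suc by (simp add: beta_def monic_OP_eq)
qed

definition PD :: "(real \<Rightarrow> real poly) \<Rightarrow> real poly \<Rightarrow> real \<Rightarrow> bool" where
  "PD R Q t \<longleftrightarrow> (\<forall>i. ((\<lambda>s. coeff (R s) i) has_real_derivative coeff Q i) (at t))"

lemma PD_const: "PD (\<lambda>s. p) 0 t" unfolding PD_def by simp

lemma PD_diff: "PD R1 Q1 t \<Longrightarrow> PD R2 Q2 t \<Longrightarrow> PD (\<lambda>s. R1 s - R2 s) (Q1 - Q2) t"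
  unfolding PD_def by (auto intro!: derivative_eq_intros)

lemma PD_add: "PD R1 Q1 t \<Longrightarrow> PD R2 Q2 t \<Longrightarrow> PD (\<lambda>s. R1 s + R2 s) (Q1 + Q2) t"
  unfolding PD_def by (auto intro!: derivative_eq_intros)

lemma PD_X: "PD R Q t \<Longrightarrow> PD (\<lambda>s. [:0,1:] * R s) ([:0,1:] * Q) t"
  unfolding PD_def
proof (intro allI)
  fix i assume a: "\<forall>i. ((\<lambda>s. coeff (R s) i) has_real_derivative coeff Q i) (at t)"
  show "((\<lambda>s. coeff ([:0, 1:] * R s) i) has_real_derivative coeff ([:0, 1:] * Q) i) (at t)"
    using a by (cases i) (simp_all add: coeff_pCons)
qed

lemma PD_smult:
  assumes "(c has_real_derivative c') (at t)" "PD R Q t"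
  shows "PD (\<lambda>s. smult (c s) (R s)) (smult c' (R t) + smult (c t) Q) t"
  using assms unfolding PD_def by (auto intro!: derivative_eq_intros)

lemma PD_mult:
  assumes "PD R1 Q1 t" "PD R2 Q2 t"
  shows "PD (\<lambda>s. R1 s * R2 s) (Q1 * R2 t + R1 t * Q2) t"
  unfolding PD_def
proof
  fix i
  have "((\<lambda>s. \<Sum>j\<le>i. coeff (R1 s) j * coeff (R2 s) (i - j)) has_real_derivative
          (\<Sum>j\<le>i. coeff Q1 j * coeff (R2 t) (i - j) + coeff Q2 (i - j) * coeff (R1 t) j)) (at t)"
    using assms unfolding PD_def by (intro DERIV_sum DERIV_mult) auto
  then have "((\<lambda>s. \<Sum>j\<le>i. coeff (R1 s) j * coeff (R2 s) (i - j)) has_real_derivative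
          (\<Sum>j\<le>i. coeff Q1 j * coeff (R2 t) (i - j) + coeff (R1 t) j * coeff Q2 (i - j))) (at t)"
    by (rule DERIV_cong) (intro sum.cong, auto)
  then show "((\<lambda>s. coeff (R1 s * R2 s) i) has_real_derivative coeff (Q1 * R2 t + R1 t * Q2) i) (at t)"
    by (simp add: coeff_mult sum.distrib)
qed

lemma PD_deg:
  assumes "PD R Q t" "\<And>s. degree (R s) \<le> N"
  shows "degree Q \<le> N"
proof (rule degree_le, intro allI impI)
  fix i assume "N < i"
  then have "\<And>s. coeff (R s) i = 0" using assms(2) by (meson coeff_eq_0 le_less_trans)
  then have "((\<lambda>s. coeff (R s) i) has_real_derivative 0) (at t)" by simp
  moreover have "((\<lambda>s. coeff (R s) i) has_real_derivative coeff Q i) (at t)"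
    using assms(1) unfolding PD_def by blast
  ultimately show "coeff Q i = 0" using DERIV_unique by metis
qed

lemma Lm_family_deriv:
  assumes pd: "PD R Q t" and deg: "\<And>s. degree (R s) \<le> N"
  shows "((\<lambda>s. Lm tau s (R s)) has_real_derivative
            Lm tau t ([:0,0,1:] * R t) + Lm tau t Q) (at t)"
proof -
  have e: "Lm tau s (R s) = (\<Sum>i\<le>N. coeff (R s) i * mu tau s i)" for s
    by (rule Lm_moments[OF deg])
  have "((\<lambda>s. \<Sum>i\<le>N. coeff (R s) i * mu tau s i) has_real_derivative
          (\<Sum>i\<le>N. coeff Q i * mu tau t i + mu tau t (i+2) * coeff (R t) i)) (at t)"
    using pd unfolding PD_def by (intro DERIV_sum DERIV_mult mu_deriv) auto
  moreover have "(\<Sum>i\<le>N. coeff Q i * mu tau t i + mu tau t (i+2) * coeff (R t) i)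
      = Lm tau t ([:0,0,1:] * R t) + Lm tau t Q"
    using Lm_moments[OF PD_deg[OF pd deg], where tau=tau and t=t] Lm_X2[OF deg, where tau=tau and t=t]
    by (simp add: sum.distrib mult.commute)
  ultimately show ?thesis unfolding e by simp
qed

lemma hh_deriv_gen:
  assumes pd: "PD (\<lambda>s. OP tau s n) Q t" and q: "\<And>k. k \<ge> n \<Longrightarrow> coeff Q k = 0"
  shows "((\<lambda>s. hh tau s n) has_real_derivative Lm tau t ([:0,0,1:] * (OP tau t n * OP tau t n))) (at t)"
proof -
  have pd2: "PD (\<lambda>s. OP tau s n * OP tau s n) (Q * OP tau t n + OP tau t n * Q) t"
    by (rule PD_mult[OF pd pd])
  have deg: "degree (OP tau s n * OP tau s n) \<le> n + n" for s
    by (metis OP_degree degree_mult_le)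
  have z0: "Lm tau t (OP tau t n * Q) = 0" by (rule OP_low[OF q])
  have z: "Lm tau t (Q * OP tau t n + OP tau t n * Q) = 0"
    unfolding Lm_add mult.commute[of Q] z0 by simp
  show ?thesis
    using Lm_family_deriv[OF pd2 deg, where tau=tau] z unfolding hh_def by simp
qed

lemma PD_OP: "\<exists>Q. PD (\<lambda>s. OP tau s n) Q t \<and> (\<forall>k\<ge>n. coeff Q k = 0)"
proof (induction n rule: nat_less_induct)
  case (1 n)
  show ?case
  proof (cases n)
    case 0 then show ?thesis using PD_const[of 1 t] by (intro exI[of _ 0]) simp
  next
    case (Suc m)
    show ?thesis
    proof (cases m)
      case 0 then show ?thesis using Suc PD_const[of "[:0,1:]" t] by (intro exI[of _ 0]) simp
    next
      case (Suc j)
      have n: "n = Suc (Suc j)" using \<open>n = Suc m\<close> Suc by simp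
      obtain Q1 where Q1: "PD (\<lambda>s. OP tau s (Suc j)) Q1 t" "\<And>k. k \<ge> Suc j \<Longrightarrow> coeff Q1 k = 0"
        using 1 n by (metis lessI)
      obtain Q0 where Q0: "PD (\<lambda>s. OP tau s j) Q0 t" "\<And>k. k \<ge> j \<Longrightarrow> coeff Q0 k = 0"
        using 1 n by (metis less_SucI lessI)
      obtain d1 where d1: "((\<lambda>s. hh tau s (Suc j)) has_real_derivative d1) (at t)"
        using hh_deriv_gen[OF Q1] by blast
      obtain d0 where d0: "((\<lambda>s. hh tau s j) has_real_derivative d0) (at t)"
        using hh_deriv_gen[OF Q0] by blast
      have bbe: "bb tau s (Suc j) = hh tau s (Suc j) / hh tau s j" for s by (simp add: bb_def)
      obtain c' where c': "((\<lambda>s. bb tau s (Suc j)) has_real_derivative c') (at t)"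
        unfolding bbe using DERIV_divide[OF d1 d0] hh_pos[of tau t j] by auto
      define Q where "Q = [:0,1:] * Q1 - (smult c' (OP tau t j) + smult (bb tau t (Suc j)) Q0)"
      have "PD (\<lambda>s. [:0,1:] * OP tau s (Suc j) - smult (bb tau s (Suc j)) (OP tau s j)) Q t"
        unfolding Q_def by (intro PD_diff PD_X PD_smult Q1 Q0 c')
      then have "PD (\<lambda>s. OP tau s n) Q t" unfolding n OP_SS .
      moreover have "\<forall>k\<ge>n. coeff Q k = 0"
      proof (intro allI impI)
        fix k assume k: "n \<le> k"
        then obtain k' where k': "k = Suc k'" "k' \<ge> Suc j" using n by (cases k) auto
        show "coeff Q k = 0" unfolding Q_def using k k' n Q1(2) Q0(2)
          by (simp add: coeff_pCons OP_coeff_high)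
      qed
      ultimately show ?thesis by blast
    qed
  qed
qed

lemma hh_deriv: "((\<lambda>s. hh tau s n) has_real_derivative hh tau t n * (bb tau t (Suc n) + bb tau t n)) (at t)"
proof -
  obtain Q where Q: "PD (\<lambda>s. OP tau s n) Q t" "\<And>k. k \<ge> n \<Longrightarrow> coeff Q k = 0"
    using PD_OP by blast
  have D: "((\<lambda>s. hh tau s n) has_real_derivative Lm tau t ([:0,0,1:] * (OP tau t n * OP tau t n))) (at t)"
    by (rule hh_deriv_gen[OF Q])
  define c where "c = bb tau t n"
  define A where "A = OP tau t (Suc n)"
  define B where "B = OP tau t (n - 1)"
  have "[:0,0,1:] * (OP tau t n * OP tau t n) = ([:0,1:] * OP tau t n) * ([:0,1:] * OP tau t n)"
    by (simp add: algebra_simps)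
  also have "\<dots> = (A + smult c B) * (A + smult c B)" unfolding A_def B_def c_def XOP ..
  also have "\<dots> = A * A + smult c (A * B) + smult c (B * A) + smult (c * c) (B * B)"
    by (simp add: algebra_simps)
  finally have e: "Lm tau t ([:0,0,1:] * (OP tau t n * OP tau t n))
      = hh tau t (Suc n) + c * Lm tau t (A * B) + c * Lm tau t (B * A) + c * c * hh tau t (n - 1)"
    by (simp add: Lm_add Lm_smult hh_def A_def B_def)
  have AB: "Lm tau t (A * B) = 0" unfolding A_def B_def by (rule OP_orth2) simp
  have BA: "Lm tau t (B * A) = 0" unfolding A_def B_def by (rule OP_orth2) simp
  have cc: "c * c * hh tau t (n - 1) = c * hh tau t n"
  proof (cases "n = 0")
    case True then show ?thesis by (simp add: c_def bb_def)
  next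
    case False
    then have "c * hh tau t (n - 1) = hh tau t n"
      unfolding c_def bb_def using hh_pos[of tau t "n - 1"] by simp
    then show ?thesis by (metis mult.assoc)
  qed
  have "Lm tau t ([:0,0,1:] * (OP tau t n * OP tau t n)) = hh tau t n * (bb tau t (Suc n) + bb tau t n)"
    unfolding e AB BA cc by (simp add: c_def hh_Suc algebra_simps)
  then show ?thesis using D by simp
qed

lemma bb_deriv: "((\<lambda>s. bb tau s n) has_real_derivative bb tau t n * (bb tau t (Suc n) - bb tau t (n - 1))) (at t)"
proof (cases n)
  case 0
  then show ?thesis by (simp add: bb_def)
next
  case (Suc m)
  have bbe: "(\<lambda>s. bb tau s n) = (\<lambda>s. hh tau s n / hh tau s m)" using Suc by (simp add: bb_def)
  have "((\<lambda>s. hh tau s n / hh tau s m) has_real_derivative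
      (hh tau t n * (bb tau t (Suc n) + bb tau t n) * hh tau t m - hh tau t n * (hh tau t m * (bb tau t (Suc m) + bb tau t m)))
        / (hh tau t m * hh tau t m)) (at t)"
    by (rule DERIV_divide[OF hh_deriv hh_deriv]) (use hh_pos[of tau t m] in simp)
  moreover have "(hh tau t n * (bb tau t (Suc n) + bb tau t n) * hh tau t m - hh tau t n * (hh tau t m * (bb tau t (Suc m) + bb tau t m)))
        / (hh tau t m * hh tau t m) = bb tau t n * (bb tau t (Suc n) - bb tau t (n - 1))"
    using Suc hh_pos[of tau t m] by (simp add: bb_def field_simps)
  ultimately show ?thesis unfolding bbe by simp
qed

lemma bb_0[simp]: "bb tau t 0 = 0" by (simp add: bb_def)

lemma Vp_alt: "Vp tau t = smult 6 ([:0,1:]^5) - smult (4*tau) ([:0,1:]^3) - smult (2*t) [:0,1:]"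
  by (rule poly_eq_poly_eq_iff[THEN iffD1]) (simp add: poly_Vp fun_eq_iff)

lemma freud_ibp:
  assumes "n \<ge> 1"
  shows "real n * hh tau t (n - 1) = Lm tau t (OP tau t n * OP tau t (n - 1) * Vp tau t)"
proof -
  have "Lm tau t (pderiv (OP tau t n * OP tau t (n - 1))) = Lm tau t (OP tau t n * OP tau t (n - 1) * Vp tau t)"
    by (rule Lm_IBP)
  moreover have "pderiv (OP tau t n * OP tau t (n - 1))
      = OP tau t n * pderiv (OP tau t (n - 1)) + OP tau t (n - 1) * pderiv (OP tau t n)"
    by (rule pderiv_mult)
  moreover have "Lm tau t (OP tau t n * pderiv (OP tau t (n - 1))) = 0"
    by (rule OP_low) (simp add: coeff_pderiv OP_coeff_high)
  moreover have "Lm tau t (OP tau t (n - 1) * pderiv (OP tau t n)) = real n * hh tau t (n - 1)"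
  proof -
    define r where "r = pderiv (OP tau t n) - smult (real n) ([:0,1:]^(n - 1))"
    have r0: "coeff r k = 0" if "k \<ge> n - 1" for k
    proof (cases "k = n - 1")
      case True
      then show ?thesis using assms unfolding r_def by (simp add: coeff_pderiv coeff_Xpow)
    next
      case False
      then show ?thesis using that unfolding r_def by (simp add: coeff_pderiv coeff_Xpow OP_coeff_high)
    qed
    have "pderiv (OP tau t n) = smult (real n) ([:0,1:]^(n - 1)) + r" unfolding r_def by simp
    then have "Lm tau t (OP tau t (n - 1) * pderiv (OP tau t n))
        = real n * Lm tau t (OP tau t (n - 1) * [:0,1:]^(n - 1)) + Lm tau t (OP tau t (n - 1) * r)"
      by (simp add: distrib_left Lm_add Lm_smult)
    also have "\<dots> = real n * hh tau t (n - 1)" using OP_lead' OP_low[OF r0] by simp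
    finally show ?thesis .
  qed
  ultimately show ?thesis by (simp add: Lm_add)
qed

definition FR :: "real \<Rightarrow> real \<Rightarrow> nat \<Rightarrow> real" where
  "FR tau t n = bb tau t n * (6 * (bb tau t (n+2) * bb tau t (n+1)
        + (bb tau t (n+1) + bb tau t n) * (bb tau t (n+1) + bb tau t n + bb tau t (n-1))
        + bb tau t (n-1) * (bb tau t n + bb tau t (n-1) + bb tau t (n-2)))
      - 4 * tau * (bb tau t (n+1) + bb tau t n + bb tau t (n-1)) - 2 * t)"

lemma freud:
  assumes "n \<ge> 1"
  shows "real n = FR tau t n"
proof -
  define X :: "real poly" where "X = [:0,1:]"
  have V: "OP tau t n * OP tau t (n - 1) * Vp tau t
     = smult 6 ((X * (X * OP tau t n)) * (X * (X * (X * OP tau t (n - 1)))))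
     - smult (4*tau) ((X * OP tau t n) * (X * (X * OP tau t (n - 1))))
     - smult (2*t) (OP tau t n * (X * OP tau t (n - 1)))"
    unfolding Vp_alt X_def by (simp add: algebra_simps numeral_eq_Suc)
  have XO: "X * OP tau t i = OP tau t (Suc i) + smult (bb tau t i) (OP tau t (i - 1))" for i
    unfolding X_def by (rule XOP)
  have key: "Lm tau t (OP tau t n * OP tau t (n - 1) * Vp tau t) = hh tau t (n - 1) * FR tau t n"
  proof -
    obtain m where m: "n = Suc m" using assms by (cases n) auto
    consider "m = 0" | "m = 1" | "m = 2" | k where "m = Suc (Suc (Suc k))"
      by (metis One_nat_def Suc_1 not0_implies_Suc numeral_3_eq_3 numeral_2_eq_2)
    then show ?thesis
    proof cases
      case 1
      show ?thesis unfolding V unfolding m 1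
        by (simp del: OP.simps add: XO distrib_left distrib_right Lm_add Lm_diff Lm_smult OP_gram hh_Suc FR_def eval_nat_numeral)
           (simp add: algebra_simps eval_nat_numeral)
    next
      case 2
      show ?thesis unfolding V unfolding m 2
        by (simp del: OP.simps add: XO distrib_left distrib_right Lm_add Lm_diff Lm_smult OP_gram hh_Suc FR_def eval_nat_numeral)
           (simp add: algebra_simps eval_nat_numeral)
    next
      case 3
      show ?thesis unfolding V unfolding m 3
        by (simp del: OP.simps add: XO distrib_left distrib_right Lm_add Lm_diff Lm_smult OP_gram hh_Suc FR_def eval_nat_numeral)
           (simp add: algebra_simps eval_nat_numeral)
    next
      case 4
      show ?thesis unfolding V unfolding m 4
        by (simp del: OP.simps add: XO distrib_left distrib_right Lm_add Lm_diff Lm_smult OP_gram hh_Suc FR_def eval_nat_numeral)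
           (simp add: algebra_simps eval_nat_numeral)
    qed
  qed
  have "real n * hh tau t (n - 1) = hh tau t (n - 1) * FR tau t n"
    using freud_ibp[OF assms] key by simp
  then show ?thesis using hh_pos[of tau t "n - 1"] by simp
qed

theorem lemma3p3:
  fixes tau t :: real and n :: nat
  assumes "n \<ge> 1"
  defines "b \<equiv> (\<lambda>m s. beta m tau s)"
  shows "b n differentiable at t \<and>
         b (Suc n) differentiable at t \<and>
         deriv (b n) differentiable at t \<and>
         deriv (b (Suc n)) differentiable at t \<and>
         deriv (deriv (b n)) t
           - 3 * (b n t + b (Suc n) t - 2/9 * tau) * deriv (b n) t
           + (b n t) ^ 3 + 6 * (b n t) ^ 2 * b (Suc n) t + 3 * b n t * (b (Suc n) t) ^ 2
           - 2/3 * tau * b n t * (b n t + 2 * b (Suc n) t)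
           - 1/3 * t * b n t = real n / 6 \<and>
         deriv (deriv (b (Suc n))) t
           + 3 * (b n t + b (Suc n) t - 2/9 * tau) * deriv (b (Suc n)) t
           + (b (Suc n) t) ^ 3 + 6 * (b (Suc n) t) ^ 2 * b n t + 3 * b (Suc n) t * (b n t) ^ 2
           - 2/3 * tau * b (Suc n) t * (2 * b n t + b (Suc n) t)
           - 1/3 * t * b (Suc n) t = real (n + 1) / 6"
proof -
  have bfun: "b k = (\<lambda>s. bb tau s k)" for k unfolding b_def by (simp add: beta_eq fun_eq_iff)
  define d where "d k s = bb tau s k * (bb tau s (Suc k) - bb tau s (k - 1))" for k s
  have D: "((\<lambda>s. bb tau s k) has_real_derivative d k s) (at s)" for k s
    unfolding d_def by (rule bb_deriv)
  have dd: "deriv (b k) = d k" for k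
    unfolding bfun by (rule ext, rule DERIV_imp_deriv, rule D)
  have D2: "(d k has_real_derivative
      d k s * (bb tau s (Suc k) - bb tau s (k - 1)) + (d (Suc k) s - d (k - 1) s) * bb tau s k) (at s)" for k s
  proof -
    have "((\<lambda>s. bb tau s k * (bb tau s (Suc k) - bb tau s (k - 1))) has_real_derivative
      d k s * (bb tau s (Suc k) - bb tau s (k - 1)) + (d (Suc k) s - d (k - 1) s) * bb tau s k) (at s)"
      by (intro DERIV_mult DERIV_diff D)
    then show ?thesis unfolding d_def[abs_def] by simp
  qed
  have ddd: "deriv (deriv (b k)) t = d k t * (bb tau t (Suc k) - bb tau t (k - 1)) + (d (Suc k) t - d (k - 1) t) * bb tau t k" for k
    unfolding dd by (rule DERIV_imp_deriv, rule D2)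
  have diff1: "b k differentiable at t" for k
    unfolding bfun by (rule differentiableI[OF has_field_derivative_imp_has_derivative[OF D]])
  have diff2: "deriv (b k) differentiable at t" for k
    unfolding dd by (rule differentiableI[OF has_field_derivative_imp_has_derivative[OF D2]])
  obtain m where m: "n = Suc m" using assms by (cases n) auto
  have F1: "real n = FR tau t n" by (rule freud[OF assms(1)])
  have F2: "real (n + 1) = FR tau t (n + 1)" by (rule freud) simp
  have bt: "b k t = bb tau t k" for k by (simp add: bfun)
  have e1: "deriv (deriv (b n)) t
           - 3 * (b n t + b (Suc n) t - 2/9 * tau) * deriv (b n) t
           + (b n t) ^ 3 + 6 * (b n t) ^ 2 * b (Suc n) t + 3 * b n t * (b (Suc n) t) ^ 2
           - 2/3 * tau * b n t * (b n t + 2 * b (Suc n) t)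
           - 1/3 * t * b n t = real n / 6"
    unfolding ddd unfolding dd bt F1 unfolding m
    by (simp add: d_def FR_def algebra_simps power2_eq_square power3_eq_cube)
  have e2: "deriv (deriv (b (Suc n))) t
           + 3 * (b n t + b (Suc n) t - 2/9 * tau) * deriv (b (Suc n)) t
           + (b (Suc n) t) ^ 3 + 6 * (b (Suc n) t) ^ 2 * b n t + 3 * b (Suc n) t * (b n t) ^ 2
           - 2/3 * tau * b (Suc n) t * (2 * b n t + b (Suc n) t)
           - 1/3 * t * b (Suc n) t = real (n + 1) / 6"
    unfolding ddd unfolding dd bt F2 unfolding m
    by (simp add: d_def FR_def algebra_simps power2_eq_square power3_eq_cube)
  show ?thesis using diff1 diff2 e1 e2 by blast
qed

end
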